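(* Let $(\mathcal{L},[\cdot,\cdot,\cdot]_{\mathcal{L}})$ be a (right) $3$-Leibniz algebra over a field $\mathbb{K}$ and $\overline{\mathcal{L}}=\mathbb{K}\oplus\mathcal{L}$. Let $R_1$ be the linear map on $(\mathbb{K}\oplus(\mathcal{L}\otimes\mathcal{L}))^{\otimes2}$ given by $R_1((a,x_1\otimes x_2)\otimes(b,y_1\otimes y_2))=(b,y_1\otimes y_2)\otimes(a,x_1\otimes x_2)+(1,0)\otimes(0,[x_1,y_1,y_2]_{\mathcal{L}}\otimes x_2+x_1\otimes[x_2,y_1,y_2]_{\mathcal{L}})$, and $R_2$ the linear map on $(\overline{\mathcal{L}}\otimes\overline{\mathcal{L}})^{\otimes2}$ given by $R_2((a_1,x_1)\otimes(a_2,x_2)\otimes(b_1,y_1)\otimes(b_2,y_2))=(b_1,y_1)\otimes(b_2,y_2)\otimes(a_1,x_1)\otimes(a_2,x_2)+(1,0)\otimes(1,0)\otimes\big((0,[x_1,y_1,y_2]_{\mathcal{L}})\otimes(a_2,x_2)+(a_1,x_1)\otimes(0,[x_2,y_1,y_2]_{\mathcal{L}})\big)$. Define the injective linear map $\mathfrak{s}:\mathbb{K}\oplus(\mathcal{L}\otimes\mathcal{L})\to\overline{\mathcal{L}}\otimes\overline{\mathcal{L}}$ by $\mathfrak{s}(a,x\otimes y)=a(1,0)\otimes(1,0)+(0,x)\otimes(0,y)$. Then $(\mathfrak{s}\otimes\mathfrak{s})\circ R_1=R_2\circ(\mathfrak{s}\otimes\mathfrak{s})$.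
   Context: A (right) $3$-Leibniz algebra is a vector space $\mathcal{L}$ with a trilinear map $[\cdot,\cdot,\cdot]_{\mathcal{L}}$ such that $[[x_1,x_2,x_3]_{\mathcal{L}},y_1,y_2]_{\mathcal{L}}=[[x_1,y_1,y_2]_{\mathcal{L}},x_2,x_3]_{\mathcal{L}}+[x_1,[x_2,y_1,y_2]_{\mathcal{L}},x_3]_{\mathcal{L}}+[x_1,x_2,[x_3,y_1,y_2]_{\mathcal{L}}]_{\mathcal{L}}$. Both $R_1$ and $R_2$ are solutions of the Yang-Baxter equation; the claim says $\mathfrak{s}$ is a homomorphism between them. *)

theory Defs
  imports Complex_Main "HOL-Library.Poly_Mapping"
begin

text \<open>Concrete model of vector spaces over a field 'k: a vector space with basis indexed
by a type i is the space of finitely supported functions from i to k.  Every vector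
space is of this form (choice of a basis).  With this model, tensor products and
direct sums are again of this form.\<close>

lift_definition pscale :: "'k::field \<Rightarrow> ('i \<Rightarrow>\<^sub>0 'k) \<Rightarrow> ('i \<Rightarrow>\<^sub>0 'k)"
  is "\<lambda>c f i. c * f i"
  by (simp add: rev_finite_subset)

lift_definition tens :: "('i \<Rightarrow>\<^sub>0 'k::field) \<Rightarrow> ('j \<Rightarrow>\<^sub>0 'k) \<Rightarrow> ('i \<times> 'j \<Rightarrow>\<^sub>0 'k)"
  is "\<lambda>f g (i, j). f i * g j"
proof -
  fix f :: "'i \<Rightarrow> 'k" and g :: "'j \<Rightarrow> 'k"
  assume "finite {x. f x \<noteq> 0}" "finite {x. g x \<noteq> 0}"
  then have "finite ({x. f x \<noteq> 0} \<times> {x. g x \<noteq> 0})" by simp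
  moreover have "{x. (case x of (i, j) \<Rightarrow> f i * g j) \<noteq> 0} \<subseteq> {x. f x \<noteq> 0} \<times> {x. g x \<noteq> 0}"
    by auto
  ultimately show "finite {x. (case x of (i, j) \<Rightarrow> f i * g j) \<noteq> 0}"
    by (rule finite_subset[rotated])
qed

text \<open>Direct sum of K and V, with basis indexed by 'i option
(None for the K summand): dsum a x = (a, x).\<close>
lift_definition dsum :: "'k::field \<Rightarrow> ('i \<Rightarrow>\<^sub>0 'k) \<Rightarrow> ('i option \<Rightarrow>\<^sub>0 'k)"
  is "\<lambda>a f oo. case oo of None \<Rightarrow> a | Some i \<Rightarrow> f i"
proof -
  fix a :: 'k and f :: "'i \<Rightarrow> 'k"
  assume "finite {x. f x \<noteq> 0}"
  then have "finite (insert None (Some ` {x. f x \<noteq> 0}))" by simp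
  moreover have "{x. (case x of None \<Rightarrow> a | Some i \<Rightarrow> f i) \<noteq> 0} \<subseteq> insert None (Some ` {x. f x \<noteq> 0})"
  proof
    fix x assume "x \<in> {x. (case x of None \<Rightarrow> a | Some i \<Rightarrow> f i) \<noteq> 0}"
    then show "x \<in> insert None (Some ` {x. f x \<noteq> 0})" by (cases x) auto
  qed
  ultimately show "finite {x. (case x of None \<Rightarrow> a | Some i \<Rightarrow> f i) \<noteq> 0}"
    by (rule finite_subset[rotated])
qed

abbreviation klinear :: "(('i \<Rightarrow>\<^sub>0 'k::field) \<Rightarrow> ('j \<Rightarrow>\<^sub>0 'k)) \<Rightarrow> bool" where
  "klinear f \<equiv> Vector_Spaces.linear pscale pscale f"

definition leibniz3 :: "(('i \<Rightarrow>\<^sub>0 'k::field) \<Rightarrow> ('i \<Rightarrow>\<^sub>0 'k) \<Rightarrow> ('i \<Rightarrow>\<^sub>0 'k) \<Rightarrow> ('i \<Rightarrow>\<^sub>0 'k)) \<Rightarrow> bool" where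
  "leibniz3 br \<longleftrightarrow>
     (\<forall>y z. klinear (\<lambda>x. br x y z)) \<and>
     (\<forall>x z. klinear (\<lambda>y. br x y z)) \<and>
     (\<forall>x y. klinear (\<lambda>z. br x y z)) \<and>
     (\<forall>x1 x2 x3 y1 y2.
        br (br x1 x2 x3) y1 y2 =
          br (br x1 y1 y2) x2 x3 + br x1 (br x2 y1 y2) x3 + br x1 x2 (br x3 y1 y2))"

lemma lookup_tens:
  fixes u :: "'i \<Rightarrow>\<^sub>0 'k::field" and v :: "'j \<Rightarrow>\<^sub>0 'k"
  shows "Poly_Mapping.lookup (tens u v) (i, j) = Poly_Mapping.lookup u i * Poly_Mapping.lookup v j"
  by transfer simp

lemma lookup_dsum: "Poly_Mapping.lookup (dsum a u) None = a" "Poly_Mapping.lookup (dsum a u) (Some i) = Poly_Mapping.lookup u i"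
  by (transfer, simp) (transfer, simp)

end

theory Submission
  imports Defs
begin


lemma tens_add1: "tens (x + y) z = tens x z + tens y z"
  by (rule poly_mapping_eqI) (auto simp: lookup_add lookup_tens algebra_simps)
lemma tens_add2: "tens z (x + y) = tens z x + tens z y"
  by (rule poly_mapping_eqI) (auto simp: lookup_add lookup_tens algebra_simps)
lemma tens_01: "tens 0 z = 0"
  by (rule poly_mapping_eqI) (auto simp: lookup_tens)
lemma tens_02: "tens z 0 = 0"
  by (rule poly_mapping_eqI) (auto simp: lookup_tens)
lemma dsum_add: "dsum a x + dsum b y = dsum (a + b) (x + y)"
  by (rule poly_mapping_eqI, case_tac k) (auto simp: lookup_add lookup_dsum split: option.splits)
lemma dsum_00: "dsum 0 0 = 0"
  by (rule poly_mapping_eqI, case_tac k) (auto simp: lookup_dsum split: option.splits)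
lemma pscale_E: "pscale a (tens (dsum 1 0) (dsum 1 0)) = tens (dsum a 0) (dsum 1 0)"
  by (rule poly_mapping_eqI, case_tac k, case_tac aa, case_tac b) (auto simp: lookup_tens lookup_dsum pscale.rep_eq split: option.splits)

lemma lin_add: "klinear f \<Longrightarrow> f (x + y) = f x + f y"
  by (simp add: Vector_Spaces.linear_iff)
lemma lin_0: "klinear f \<Longrightarrow> f 0 = 0"
  using lin_add[of f 0 0] by simp

lemma update_single: "Poly_Mapping.lookup f a = 0 \<Longrightarrow> Poly_Mapping.update a b f = f + Poly_Mapping.single a b"
  by (rule poly_mapping_eqI) (auto simp: lookup_add lookup_update lookup_single)

definition gen :: "('i \<times> 'i) option \<Rightarrow> 'k::field \<Rightarrow> (('i \<times> 'i) option \<Rightarrow>\<^sub>0 'k)" where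
  "gen p c = (case p of None \<Rightarrow> dsum c (tens 0 0)
     | Some (i, j) \<Rightarrow> dsum 0 (tens (Poly_Mapping.single i c) (Poly_Mapping.single j 1)))"

lemma single_gen:
  fixes p q :: "('i \<times> 'i) option" and c :: "'k::field"
  shows "Poly_Mapping.single (p, q) c = tens (gen p c) (gen q 1)"
proof (rule poly_mapping_eqI)
  fix k :: "('i \<times> 'i) option \<times> ('i \<times> 'i) option"
  obtain u v where k: "k = (u, v)" by fastforce
  show "Poly_Mapping.lookup (Poly_Mapping.single (p, q) c) k = Poly_Mapping.lookup (tens (gen p c) (gen q 1)) k"
    unfolding k lookup_tens
    by (cases u; cases v; cases p; cases q)
       (auto simp: gen_def lookup_tens lookup_dsum lookup_single when_def split: if_splits)
qed

theorem proposition5p8: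
  fixes br :: "('i \<Rightarrow>\<^sub>0 'k::field) \<Rightarrow> ('i \<Rightarrow>\<^sub>0 'k) \<Rightarrow> ('i \<Rightarrow>\<^sub>0 'k) \<Rightarrow> ('i \<Rightarrow>\<^sub>0 'k)"
    and R1 :: "(('i \<times> 'i) option \<times> ('i \<times> 'i) option \<Rightarrow>\<^sub>0 'k)
               \<Rightarrow> (('i \<times> 'i) option \<times> ('i \<times> 'i) option \<Rightarrow>\<^sub>0 'k)"
    and R2 :: "((('i option \<times> 'i option) \<times> ('i option \<times> 'i option)) \<Rightarrow>\<^sub>0 'k)
               \<Rightarrow> ((('i option \<times> 'i option) \<times> ('i option \<times> 'i option)) \<Rightarrow>\<^sub>0 'k)"
    and s :: "(('i \<times> 'i) option \<Rightarrow>\<^sub>0 'k) \<Rightarrow> ('i option \<times> 'i option \<Rightarrow>\<^sub>0 'k)"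
    and ss :: "(('i \<times> 'i) option \<times> ('i \<times> 'i) option \<Rightarrow>\<^sub>0 'k)
               \<Rightarrow> ((('i option \<times> 'i option) \<times> ('i option \<times> 'i option)) \<Rightarrow>\<^sub>0 'k)"
  assumes L: "leibniz3 br"
    and R1_lin: "klinear R1"
    and R1_def: "\<And>a x1 x2 b y1 y2.
       R1 (tens (dsum a (tens x1 x2)) (dsum b (tens y1 y2))) =
         tens (dsum b (tens y1 y2)) (dsum a (tens x1 x2))
         + tens (dsum 1 0) (dsum 0 (tens (br x1 y1 y2) x2 + tens x1 (br x2 y1 y2)))"
    and R2_lin: "klinear R2"
    and R2_def: "\<And>a1 x1 a2 x2 b1 y1 b2 y2.
       R2 (tens (tens (dsum a1 x1) (dsum a2 x2)) (tens (dsum b1 y1) (dsum b2 y2))) =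
         tens (tens (dsum b1 y1) (dsum b2 y2)) (tens (dsum a1 x1) (dsum a2 x2))
         + tens (tens (dsum 1 0) (dsum 1 0))
             (tens (dsum 0 (br x1 y1 y2)) (dsum a2 x2) + tens (dsum a1 x1) (dsum 0 (br x2 y1 y2)))"
    and s_lin: "klinear s"
    and s_def: "\<And>a x y. s (dsum a (tens x y)) =
                   pscale a (tens (dsum 1 0) (dsum 1 0)) + tens (dsum 0 x) (dsum 0 y)"
    and ss_lin: "klinear ss"
    and ss_def: "\<And>u v. ss (tens u v) = tens (s u) (s v)"
  shows "ss \<circ> R1 = R2 \<circ> ss"
  
proof -
  have br1: "br 0 y z = 0" for y z using L unfolding leibniz3_def by (meson lin_0)
  have br2: "br x 0 z = 0" for x z using L unfolding leibniz3_def by (meson lin_0)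
  have br3: "br x y 0 = 0" for x y using L unfolding leibniz3_def by (meson lin_0)
  have sD: "s (dsum a (tens x y)) = tens (dsum a 0) (dsum 1 0) + tens (dsum 0 x) (dsum 0 y)" for a x y
    using s_def pscale_E by simp
  have s10: "s (dsum 1 0) = tens (dsum 1 0) (dsum 1 0)"
    using sD[of 1 0 0] by (simp add: tens_01 tens_02 dsum_00)
  have s0: "s (dsum 0 (tens x y + tens z w)) = tens (dsum 0 x) (dsum 0 y) + tens (dsum 0 z) (dsum 0 w)" for x y z w
  proof -
    have "dsum 0 (tens x y + tens z w) = dsum 0 (tens x y) + dsum 0 (tens z w)"
      by (simp add: dsum_add)
    then show ?thesis using lin_add[OF s_lin] sD by (simp add: tens_01 tens_02 dsum_00)
  qed
  have core: "ss (R1 (tens (dsum a (tens x1 x2)) (dsum b (tens y1 y2))))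
      = R2 (ss (tens (dsum a (tens x1 x2)) (dsum b (tens y1 y2))))" for a x1 x2 b y1 y2
    apply (simp only: R1_def ss_def lin_add[OF ss_lin] s0 s10 sD tens_add1 tens_add2 lin_add[OF R2_lin] R2_def)
    apply (simp add: br1 br2 br3 tens_01 tens_02 dsum_00 tens_add1 tens_add2)
    done
  have "ss (R1 w) = R2 (ss w)" for w
  proof (induction w rule: update_induct)
    case const
    then show ?case using lin_0[OF ss_lin] lin_0[OF R1_lin] lin_0[OF R2_lin] by simp
  next
    case (update f a b)
    obtain p q where a: "a = (p, q)" by fastforce
    have "Poly_Mapping.lookup f a = 0" using update(1) by (simp add: in_keys_iff)
    then have "Poly_Mapping.update a b f = f + tens (gen p b) (gen q 1)"
      using update_single single_gen a by metis
    moreover obtain c1 x1 x2 where g1: "gen p b = dsum c1 (tens x1 x2)"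
      unfolding gen_def by (cases p; cases q) (auto split: prod.splits)
    moreover obtain c2 y1 y2 where g2: "gen q (1::'k) = dsum c2 (tens y1 y2)"
      unfolding gen_def by (cases p; cases q) (auto split: prod.splits)
    ultimately have e: "Poly_Mapping.update a b f = f + tens (dsum c1 (tens x1 x2)) (dsum c2 (tens y1 y2))"
      by simp
    show ?case
      unfolding e lin_add[OF R1_lin] lin_add[OF ss_lin] lin_add[OF R2_lin] update(3) core ..
  qed
  then show ?thesis by auto
qed

end
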